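(* Let $X_1,\dots,X_n$ be independent real-valued random variables with continuous distributions, with $X_1,\dots,X_{k_1}$ i.i.d. and $X_{k_1+1},\dots,X_n$ i.i.d. Let $R_i=\#\{j:X_j\le X_i\}$ be the combined-sample ranks. For $1\le m<k_1$ let $S_m=\sum_{i=1}^mR_i$. Then for every $\delta>0$, $$\Pr(|S_m-\mathbb E[S_m]|>\delta)\le 2\exp\!\left(-2\min(m,k_1-m,n-k_1)\left(\frac{\delta}{2\max(k_1-m,n-k_1)\,m}\right)^2\right).$$ *)

theory Defs
  imports "HOL-Probability.Probability"
begin

definition rank :: "nat \<Rightarrow> (nat \<Rightarrow> 'a \<Rightarrow> real) \<Rightarrow> nat \<Rightarrow> 'a \<Rightarrow> nat" where
  "rank n X i \<omega> = card {j \<in> {1..n}. X j \<omega> \<le> X i \<omega>}"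

end

theory Submission
  imports Defs
begin


lemma (in prob_space) mgf_bound:
  fixes Z :: "nat \<Rightarrow> 'a \<Rightarrow> real"
  assumes ind: "indep_vars (\<lambda>_. borel) Z {..<K}"
    and bnd: "\<And>t \<omega>. t < K \<Longrightarrow> \<omega> \<in> space M \<Longrightarrow> Z t \<omega> \<in> {a..b}"
    and l: "l > 0"
  shows "(\<integral>\<^sup>+\<omega>. ennreal (exp (l * (\<Sum>t<K. Z t \<omega> - expectation (Z t)))) \<partial>M)
          \<le> ennreal (exp (real K * l\<^sup>2 * (b - a)\<^sup>2 / 8))"
proof -
  define \<mu>' where "\<mu>' = (\<lambda>i. expectation (Z i))"
  have rv: "\<And>t. t < K \<Longrightarrow> random_variable borel (Z t)"
    using ind unfolding indep_vars_def by auto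
  have "(\<integral>\<^sup>+\<omega>. ennreal (exp (l * (\<Sum>t<K. Z t \<omega> - \<mu>' t))) \<partial>M) =
             (\<integral>\<^sup>+x. (\<Prod>i<K. ennreal (exp (l * (Z i x - \<mu>' i)))) \<partial>M)"
    by (intro nn_integral_cong)
       (simp_all add: sum_distrib_left ring_distribs exp_diff exp_sum prod_ennreal)
  also have "\<dots> = (\<Prod>i<K. \<integral>\<^sup>+x. ennreal (exp (l * (Z i x - \<mu>' i))) \<partial>M)"
    by (intro indep_vars_nn_integral indep_vars_compose2[OF ind]) auto
  also have "\<dots> \<le> (\<Prod>i<K. ennreal (exp (l\<^sup>2 * (b - a)\<^sup>2 / 8)))"
  proof (intro prod_mono_ennreal)
    fix i assume i: "i \<in> {..<K}"
    interpret interval_bounded_random_variable M "Z i" a b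
      by unfold_locales (use i rv bnd in auto)
    show "(\<integral>\<^sup>+x. ennreal (exp (l * (Z i x - \<mu>' i))) \<partial>M) \<le> ennreal (exp (l\<^sup>2 * (b - a)\<^sup>2 / 8))"
      unfolding \<mu>'_def by (rule Hoeffdings_lemma_nn_integral) fact+
  qed
  also have "\<dots> = ennreal (exp (real K * l\<^sup>2 * (b - a)\<^sup>2 / 8))"
  proof -
    have "exp (l\<^sup>2 * (b - a)\<^sup>2 / 8) ^ K = exp (real K * (l\<^sup>2 * (b - a)\<^sup>2 / 8))"
      by (rule exp_of_nat_mult[symmetric])
    hence "ennreal (exp (l\<^sup>2 * (b - a)\<^sup>2 / 8)) ^ K = ennreal (exp (real K * (l\<^sup>2 * (b - a)\<^sup>2 / 8)))"
      by (simp add: ennreal_power)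
    thus ?thesis by (simp add: mult.assoc)
  qed
  finally show ?thesis unfolding \<mu>'_def .
qed

lemma (in prob_space) U_upper:
  fixes Z :: "'s \<Rightarrow> nat \<Rightarrow> 'a \<Rightarrow> real"
  assumes fin: "finite F" "F \<noteq> {}" and K: "K > 0" and ab: "a < b"
    and ind: "\<And>s. s \<in> F \<Longrightarrow> indep_vars (\<lambda>_. borel) (Z s) {..<K}"
    and bnd: "\<And>s t \<omega>. s \<in> F \<Longrightarrow> t < K \<Longrightarrow> \<omega> \<in> space M \<Longrightarrow> Z s t \<omega> \<in> {a..b}"
    and eps: "\<epsilon> > 0"
  shows "prob {\<omega>\<in>space M. (\<Sum>s\<in>F. \<Sum>t<K. Z s t \<omega> - expectation (Z s t)) / card F \<ge> \<epsilon>}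
          \<le> exp (-2 * \<epsilon>\<^sup>2 / (real K * (b - a)\<^sup>2))"
proof -
  define c where "c = real (card F)"
  have c: "c > 0" using fin by (simp add: c_def card_gt_0_iff)
  define Y where "Y s \<omega> = (\<Sum>t<K. Z s t \<omega> - expectation (Z s t))" for s \<omega>
  define d where "d = real K * (b - a)\<^sup>2"
  have d: "d > 0" using K ab by (simp add: d_def)
  define l where "l = 4 * \<epsilon> / d"
  have l: "l > 0" using d eps by (simp add: l_def)
  define E where "E = exp (real K * l\<^sup>2 * (b - a)\<^sup>2 / 8)"
  have meas: "\<And>s t. s \<in> F \<Longrightarrow> t < K \<Longrightarrow> Z s t \<in> borel_measurable M"
    using ind unfolding indep_vars_def by auto
  have measY: "\<And>s. s \<in> F \<Longrightarrow> Y s \<in> borel_measurable M"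
    unfolding Y_def by (intro borel_measurable_sum borel_measurable_diff meas) auto
  have measG: "(\<lambda>\<omega>. (\<Sum>s\<in>F. Y s \<omega>) / c) \<in> borel_measurable M"
    by (intro borel_measurable_divide borel_measurable_sum measY) auto
  have "ennreal (prob {\<omega>\<in>space M. (\<Sum>s\<in>F. \<Sum>t<K. Z s t \<omega> - expectation (Z s t)) / card F \<ge> \<epsilon>})
      = emeasure M {\<omega>\<in>space M. (\<Sum>s\<in>F. Y s \<omega>) / c \<ge> \<epsilon>}" (is "ennreal ?P = _")
    by (simp add: emeasure_eq_measure Y_def c_def)
  also have "\<dots> \<le> ennreal (exp (-l * \<epsilon>)) * (\<integral>\<^sup>+\<omega>. ennreal (exp (l * ((\<Sum>s\<in>F. Y s \<omega>) / c))) * indicator (space M) \<omega> \<partial>M)"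
    by (intro Chernoff_ineq_nn_integral_ge l sets.top borel_measurable_times measG borel_measurable_indicator) 
  also have "(\<integral>\<^sup>+\<omega>. ennreal (exp (l * ((\<Sum>s\<in>F. Y s \<omega>) / c))) * indicator (space M) \<omega> \<partial>M)
           = (\<integral>\<^sup>+\<omega>. ennreal (exp (l * ((\<Sum>s\<in>F. Y s \<omega>) / c))) \<partial>M)"
    by (intro nn_integral_cong) auto
  also have "\<dots> \<le> (\<integral>\<^sup>+\<omega>. (\<Sum>s\<in>F. ennreal (1 / c) * ennreal (exp (l * Y s \<omega>))) \<partial>M)"
  proof (intro nn_integral_mono)
    fix \<omega>
    have "exp (l * ((\<Sum>s\<in>F. Y s \<omega>) / c)) = exp (\<Sum>s\<in>F. (1 / c) *\<^sub>R (l * Y s \<omega>))"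
      by (simp add: sum_distrib_left sum_divide_distrib)
    also have "\<dots> \<le> (\<Sum>s\<in>F. (1 / c) * exp (l * Y s \<omega>))"
      by (rule convex_on_sum[OF fin exp_convex]) (use c in \<open>auto simp: c_def\<close>)
    finally have "ennreal (exp (l * ((\<Sum>s\<in>F. Y s \<omega>) / c))) \<le> ennreal (\<Sum>s\<in>F. (1 / c) * exp (l * Y s \<omega>))"
      by (rule ennreal_leI)
    also have "\<dots> = (\<Sum>s\<in>F. ennreal (1 / c) * ennreal (exp (l * Y s \<omega>)))"
    proof -
      have "ennreal (\<Sum>s\<in>F. (1 / c) * exp (l * Y s \<omega>)) = (\<Sum>s\<in>F. ennreal ((1 / c) * exp (l * Y s \<omega>)))"
        using c by (intro sum_ennreal[symmetric]) auto
      also have "\<dots> = (\<Sum>s\<in>F. ennreal (1 / c) * ennreal (exp (l * Y s \<omega>)))"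
        using c by (intro sum.cong refl ennreal_mult) auto
      finally show ?thesis .
    qed
    finally show "ennreal (exp (l * ((\<Sum>s\<in>F. Y s \<omega>) / c))) \<le> (\<Sum>s\<in>F. ennreal (1 / c) * ennreal (exp (l * Y s \<omega>)))" .
  qed
  also have "\<dots> = (\<Sum>s\<in>F. \<integral>\<^sup>+\<omega>. ennreal (1 / c) * ennreal (exp (l * Y s \<omega>)) \<partial>M)"
  proof (intro nn_integral_sum)
    fix s assume "s \<in> F"
    then have [measurable]: "Y s \<in> borel_measurable M" by (rule measY)
    show "(\<lambda>\<omega>. ennreal (1 / c) * ennreal (exp (l * Y s \<omega>))) \<in> borel_measurable M" by measurable
  qed
  also have "\<dots> = (\<Sum>s\<in>F. ennreal (1 / c) * \<integral>\<^sup>+\<omega>. ennreal (exp (l * Y s \<omega>)) \<partial>M)"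
  proof (intro sum.cong refl nn_integral_cmult)
    fix s assume "s \<in> F"
    then have [measurable]: "Y s \<in> borel_measurable M" by (rule measY)
    show "(\<lambda>\<omega>. ennreal (exp (l * Y s \<omega>))) \<in> borel_measurable M" by measurable
  qed
  also have "\<dots> \<le> (\<Sum>s\<in>F. ennreal (1 / c) * ennreal E)"
    unfolding Y_def E_def
    by (intro sum_mono mult_left_mono mgf_bound[OF ind bnd l]) auto
  also have "\<dots> = ennreal E"
  proof -
    have "(\<Sum>s\<in>F. ennreal (1 / c) * ennreal E) = (\<Sum>s\<in>F. ennreal (1 / c * E))"
      using c by (intro sum.cong refl ennreal_mult[symmetric]) (auto simp: E_def)
    also have "\<dots> = ennreal (\<Sum>s\<in>F. 1 / c * E)"
      using c by (intro sum_ennreal) (simp add: E_def)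
    also have "(\<Sum>s\<in>F. 1 / c * E) = E"
      using c by (simp add: c_def)
    finally show ?thesis .
  qed
  also have "ennreal (exp (-l * \<epsilon>)) * ennreal E = ennreal (exp (-2 * \<epsilon>\<^sup>2 / (real K * (b - a)\<^sup>2)))"
  proof -
    have "exp (-l * \<epsilon>) * E = exp (d * l\<^sup>2 / 8 - l * \<epsilon>)"
      unfolding E_def d_def mult_exp_exp by (simp add: algebra_simps)
    also have "d * l\<^sup>2 / 8 - l * \<epsilon> = -2 * \<epsilon>\<^sup>2 / d"
      using d by (simp add: l_def field_simps power2_eq_square)
    finally show ?thesis by (simp add: ennreal_mult[symmetric] E_def d_def)
  qed
  finally have "ennreal ?P \<le> ennreal (exp (-2 * \<epsilon>\<^sup>2 / (real K * (b - a)\<^sup>2)))"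
    by (meson mult_left_mono zero_le)
  thus ?thesis by (subst (asm) ennreal_le_iff) auto
qed

lemma (in prob_space) U_abs:
  fixes Z :: "'s \<Rightarrow> nat \<Rightarrow> 'a \<Rightarrow> real"
  assumes fin: "finite F" "F \<noteq> {}" and K: "K > 0" and ab: "a < b"
    and ind: "\<And>s. s \<in> F \<Longrightarrow> indep_vars (\<lambda>_. borel) (Z s) {..<K}"
    and bnd: "\<And>s t \<omega>. s \<in> F \<Longrightarrow> t < K \<Longrightarrow> \<omega> \<in> space M \<Longrightarrow> Z s t \<omega> \<in> {a..b}"
    and eps: "\<epsilon> > 0"
  shows "prob {\<omega>\<in>space M. \<bar>(\<Sum>s\<in>F. \<Sum>t<K. Z s t \<omega> - expectation (Z s t)) / card F\<bar> \<ge> \<epsilon>}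
          \<le> 2 * exp (-2 * \<epsilon>\<^sup>2 / (real K * (b - a)\<^sup>2))"
proof -
  have meas: "\<And>s t. s \<in> F \<Longrightarrow> t < K \<Longrightarrow> Z s t \<in> borel_measurable M"
    using ind unfolding indep_vars_def by auto
  let ?G = "\<lambda>\<omega>. (\<Sum>s\<in>F. \<Sum>t<K. Z s t \<omega> - expectation (Z s t)) / card F"
  have measG: "?G \<in> borel_measurable M"
    by (intro borel_measurable_divide borel_measurable_sum borel_measurable_diff meas) auto
  have up: "prob {\<omega>\<in>space M. ?G \<omega> \<ge> \<epsilon>} \<le> exp (-2 * \<epsilon>\<^sup>2 / (real K * (b - a)\<^sup>2))"
    by (rule U_upper[OF fin K ab ind bnd eps])
  have ind': "\<And>s. s \<in> F \<Longrightarrow> indep_vars (\<lambda>_. borel) (\<lambda>t \<omega>. - Z s t \<omega>) {..<K}"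
    by (rule indep_vars_compose2[OF ind]) auto
  have lo0: "prob {\<omega>\<in>space M. (\<Sum>s\<in>F. \<Sum>t<K. - Z s t \<omega> - expectation (\<lambda>\<omega>. - Z s t \<omega>)) / card F \<ge> \<epsilon>}
      \<le> exp (-2 * \<epsilon>\<^sup>2 / (real K * (- a - - b)\<^sup>2))"
    by (rule U_upper[OF fin K _ ind' _ eps]) (use ab bnd in auto)
  have "{\<omega>\<in>space M. (\<Sum>s\<in>F. \<Sum>t<K. - Z s t \<omega> - expectation (\<lambda>\<omega>. - Z s t \<omega>)) / card F \<ge> \<epsilon>}
        = {\<omega>\<in>space M. ?G \<omega> \<le> - \<epsilon>}"
  proof -
    have "\<And>\<omega>. (\<Sum>s\<in>F. \<Sum>t<K. - Z s t \<omega> - expectation (\<lambda>\<omega>. - Z s t \<omega>)) / card F = - ?G \<omega>"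
      by (simp add: sum_negf[symmetric] sum_subtractf[symmetric] minus_divide_left algebra_simps del: sum_negf)
    thus ?thesis by auto
  qed
  moreover have "(- a - - b)\<^sup>2 = (b - a)\<^sup>2" by (simp add: power2_eq_square algebra_simps)
  ultimately have lo: "prob {\<omega>\<in>space M. ?G \<omega> \<le> - \<epsilon>} \<le> exp (-2 * \<epsilon>\<^sup>2 / (real K * (b - a)\<^sup>2))"
    using lo0 by simp
  have ab_iff: "\<And>\<omega>. (\<epsilon> \<le> \<bar>?G \<omega>\<bar>) = (\<epsilon> \<le> ?G \<omega> \<or> ?G \<omega> \<le> - \<epsilon>)"
    by linarith
  have "{\<omega>\<in>space M. \<bar>?G \<omega>\<bar> \<ge> \<epsilon>} = {\<omega>\<in>space M. ?G \<omega> \<ge> \<epsilon>} \<union> {\<omega>\<in>space M. ?G \<omega> \<le> - \<epsilon>}"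
    by (rule set_eqI) (simp only: Un_iff mem_Collect_eq ab_iff conj_disj_distribL)
  hence "prob {\<omega>\<in>space M. \<bar>?G \<omega>\<bar> \<ge> \<epsilon>} \<le> prob {\<omega>\<in>space M. ?G \<omega> \<ge> \<epsilon>} + prob {\<omega>\<in>space M. ?G \<omega> \<le> - \<epsilon>}"
    using measG by (simp add: measure_Un_le)
  thus ?thesis using up lo by linarith
qed



lemma rot_sum:
  fixes h :: "nat \<Rightarrow> 'b::comm_monoid_add"
  assumes p: "0 < p"
  shows "(\<Sum>s<p. h ((s + t) mod p)) = (\<Sum>s<p. h s)"
proof -
  have inj: "inj_on (\<lambda>s. (s + t) mod p) {..<p}"
  proof (rule inj_onI)
    fix x y assume x: "x \<in> {..<p}" and y: "y \<in> {..<p}" and e: "(x + t) mod p = (y + t) mod p"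
    show "x = y"
    proof (cases "x \<le> y")
      case True
      hence "p dvd (y + t) - (x + t)" using e mod_eq_dvd_iff_nat[of "x+t" "y+t" p] by simp
      hence d: "p dvd y - x" by simp
      have "y - x < p" using x y by auto
      thus ?thesis using d True by (cases "y - x = 0") (auto dest: dvd_imp_le)
    next
      case False
      hence "p dvd (x + t) - (y + t)" using e mod_eq_dvd_iff_nat[of "y+t" "x+t" p] by simp
      hence d: "p dvd x - y" by simp
      have "x - y < p" using x y by auto
      thus ?thesis using d False by (cases "x - y = 0") (auto dest: dvd_imp_le)
    qed
  qed
  have im: "(\<lambda>s. (s + t) mod p) ` {..<p} = {..<p}"
    by (rule endo_inj_surj[OF _ _ inj]) (use p in auto)
  have "(\<Sum>s<p. h s) = (\<Sum>s\<in>(\<lambda>s. (s + t) mod p) ` {..<p}. h s)" by (simp add: im)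
  also have "\<dots> = (\<Sum>s<p. h ((s + t) mod p))" by (simp add: sum.reindex[OF inj])
  finally show ?thesis by simp
qed

lemma triple_identity:
  fixes f :: "nat \<Rightarrow> nat \<Rightarrow> nat \<Rightarrow> real"
  assumes "0 < p" "0 < q" "0 < r"
  shows "(\<Sum>s\<in>{..<p}\<times>{..<q}\<times>{..<r}. \<Sum>t<K. f ((fst s + t) mod p) ((fst (snd s) + t) mod q) ((snd (snd s) + t) mod r))
       = real K * (\<Sum>i<p. \<Sum>j<q. \<Sum>l<r. f i j l)"
proof -
  have "(\<Sum>s\<in>{..<p}\<times>{..<q}\<times>{..<r}. \<Sum>t<K. f ((fst s + t) mod p) ((fst (snd s) + t) mod q) ((snd (snd s) + t) mod r))
      = (\<Sum>s1<p. \<Sum>s2<q. \<Sum>s3<r. \<Sum>t<K. f ((s1 + t) mod p) ((s2 + t) mod q) ((s3 + t) mod r))"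
    by (simp add: sum.cartesian_product')
  also have "\<dots> = (\<Sum>t<K. \<Sum>s1<p. \<Sum>s2<q. \<Sum>s3<r. f ((s1 + t) mod p) ((s2 + t) mod q) ((s3 + t) mod r))"
    by (subst sum.swap, subst (2) sum.swap, subst (3) sum.swap) (rule refl)
  also have "\<dots> = (\<Sum>t<K. \<Sum>i<p. \<Sum>j<q. \<Sum>l<r. f i j l)"
  proof (rule sum.cong[OF refl])
    fix t assume "t \<in> {..<K}"
    have "(\<Sum>s1<p. \<Sum>s2<q. \<Sum>s3<r. f ((s1 + t) mod p) ((s2 + t) mod q) ((s3 + t) mod r))
        = (\<Sum>s1<p. \<Sum>s2<q. \<Sum>s3<r. f s1 ((s2 + t) mod q) ((s3 + t) mod r))"
      using rot_sum[OF assms(1), of "\<lambda>s1. \<Sum>s2<q. \<Sum>s3<r. f s1 ((s2 + t) mod q) ((s3 + t) mod r)" t] by simp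
    also have "\<dots> = (\<Sum>s1<p. \<Sum>s2<q. \<Sum>s3<r. f s1 s2 ((s3 + t) mod r))"
      using rot_sum[OF assms(2), of "\<lambda>s2. \<Sum>s3<r. f _ s2 ((s3 + t) mod r)" t] by simp
    also have "\<dots> = (\<Sum>s1<p. \<Sum>s2<q. \<Sum>s3<r. f s1 s2 s3)"
      using rot_sum[OF assms(3), of "\<lambda>s3. f _ _ s3" t] by simp
    finally show "(\<Sum>s1<p. \<Sum>s2<q. \<Sum>s3<r. f ((s1 + t) mod p) ((s2 + t) mod q) ((s3 + t) mod r))
        = (\<Sum>i<p. \<Sum>j<q. \<Sum>l<r. f i j l)" .
  qed
  also have "\<dots> = real K * (\<Sum>i<p. \<Sum>j<q. \<Sum>l<r. f i j l)" by simp
  finally show ?thesis .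
qed

lemma sum_shift_ivl:
  fixes g :: "nat \<Rightarrow> 'b::comm_monoid_add"
  shows "sum g {a+1..a+q} = (\<Sum>j<q. g (a + 1 + j))"
proof (induction q)
  case 0 then show ?case by simp
next
  case (Suc q)
  have "{a+1..a+Suc q} = insert (a + 1 + q) {a+1..a+q}" by auto
  then show ?case using Suc by (simp add: add.commute)
qed

lemma tie_sum:
  fixes x :: "nat \<Rightarrow> real"
  assumes inj: "inj_on x {..<p}"
  shows "(\<Sum>i<p. \<Sum>j<p. if x j \<le> x i then 1 else 0 :: real) = real p * (real p + 1) / 2"
proof -
  let ?T = "(\<Sum>i<p. \<Sum>j<p. if x j \<le> x i then 1 else 0 :: real)"
  have sw: "?T = (\<Sum>i<p. \<Sum>j<p. if x i \<le> x j then 1 else 0 :: real)"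
    by (rule sum.swap)
  have "?T + ?T = (\<Sum>i<p. \<Sum>j<p. (if x j \<le> x i then 1 else 0) + (if x i \<le> x j then 1 else 0 :: real))"
    by (subst (2) sw) (simp add: sum.distrib)
  also have "\<dots> = (\<Sum>i<p. \<Sum>j<p. 1 + (if i = j then 1 else 0 :: real))"
  proof (intro sum.cong refl)
    fix i j assume "i \<in> {..<p}" "j \<in> {..<p}"
    with inj have "x i = x j \<longleftrightarrow> i = j" by (auto dest: inj_onD)
    thus "(if x j \<le> x i then 1 else 0) + (if x i \<le> x j then 1 else 0 :: real) = 1 + (if i = j then 1 else 0)"
      by auto
  qed
  also have "\<dots> = (\<Sum>i<p. real p + 1)"
    by (intro sum.cong refl) (simp add: sum.distrib)
  also have "\<dots> = real p * (real p + 1)" by simp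
  finally show ?thesis by simp
qed

lemma (in prob_space) prob_eq_zero:
  assumes indep: "indep_vars (\<lambda>_. borel) X I" and ij: "i \<in> I" "j \<in> I" "i \<noteq> j"
    and cont: "continuous_on UNIV (cdf (distr M borel (X j)))"
  shows "prob {\<omega>\<in>space M. X i \<omega> = X j \<omega>} = 0"
proof -
  have "indep_var
    borel ((\<lambda>f. f i) \<circ> (\<lambda>\<omega>. restrict (\<lambda>k. X k \<omega>) {i}))
    borel ((\<lambda>f. f j) \<circ> (\<lambda>\<omega>. restrict (\<lambda>k. X k \<omega>) {j}))"
    using ij by (intro indep_var_compose[OF indep_var_restrict[OF indep]]) auto
  also have "((\<lambda>f. f i) \<circ> (\<lambda>\<omega>. restrict (\<lambda>k. X k \<omega>) {i})) = X i" by auto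
  also have "((\<lambda>f. f j) \<circ> (\<lambda>\<omega>. restrict (\<lambda>k. X k \<omega>) {j})) = X j" by auto
  finally have iv: "indep_var borel (X i) borel (X j)" .
  then have rvi: "random_variable borel (X i)" and rvj: "random_variable borel (X j)"
    and eq: "distr M borel (X i) \<Otimes>\<^sub>M distr M borel (X j) = distr M (borel \<Otimes>\<^sub>M borel) (\<lambda>x. (X i x, X j x))"
    by (auto simp: indep_var_distribution_eq)
  interpret Mj: prob_space "distr M borel (X j)" by (rule prob_space_distr[OF rvj])
  interpret Rj: real_distribution "distr M borel (X j)" using rvj by simp
  define D where "D = {z :: real \<times> real. fst z = snd z}"
  have D: "D \<in> sets (borel \<Otimes>\<^sub>M borel)"
  proof -
    have "{z \<in> space (borel \<Otimes>\<^sub>M borel). fst z = (snd z :: real)} \<in> sets (borel \<Otimes>\<^sub>M borel)"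
      by measurable
    thus ?thesis by (simp add: D_def space_pair_measure)
  qed
  have rvp: "(\<lambda>x. (X i x, X j x)) \<in> measurable M (borel \<Otimes>\<^sub>M borel)"
    using rvi rvj by (rule measurable_Pair)
  have "emeasure M {\<omega>\<in>space M. X i \<omega> = X j \<omega>} = emeasure (distr M (borel \<Otimes>\<^sub>M borel) (\<lambda>x. (X i x, X j x))) D"
    using D rvp by (subst emeasure_distr) (auto simp: D_def intro!: arg_cong[where f="emeasure M"])
  also have "\<dots> = emeasure (distr M borel (X i) \<Otimes>\<^sub>M distr M borel (X j)) D"
    by (simp add: eq)
  also have "\<dots> = (\<integral>\<^sup>+x. emeasure (distr M borel (X j)) (Pair x -` D) \<partial>distr M borel (X i))"
    using D by (intro Mj.emeasure_pair_measure_alt) auto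
  also have "\<dots> = (\<integral>\<^sup>+x. 0 \<partial>distr M borel (X i))"
  proof (intro nn_integral_cong)
    fix x :: real
    have "Pair x -` D = {x}" by (auto simp: D_def)
    moreover have "isCont (cdf (distr M borel (X j))) x"
      using cont by (simp add: continuous_on_eq_continuous_at)
    hence "measure (distr M borel (X j)) {x} = 0" by (simp add: Rj.isCont_cdf)
    ultimately show "emeasure (distr M borel (X j)) (Pair x -` D) = 0"
      by (simp add: Mj.emeasure_eq_measure)
  qed
  also have "\<dots> = 0" by simp
  finally show ?thesis by (simp add: emeasure_eq_measure)
qed

lemma (in prob_space) indep_triples:
  fixes X :: "nat \<Rightarrow> 'a \<Rightarrow> real" and a b c :: "nat \<Rightarrow> nat" and \<alpha> \<beta> :: real
  assumes indep: "indep_vars (\<lambda>_. borel) X I"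
    and sub: "\<And>t. t < K \<Longrightarrow> a t \<in> I \<and> b t \<in> I \<and> c t \<in> I"
    and disj: "\<And>t t'. t < K \<Longrightarrow> t' < K \<Longrightarrow> t \<noteq> t' \<Longrightarrow> {a t, b t, c t} \<inter> {a t', b t', c t'} = {}"
  shows "indep_vars (\<lambda>_. borel) (\<lambda>t \<omega>. \<alpha> * (if X (b t) \<omega> \<le> X (a t) \<omega> then 1 else 0)
                                       + \<beta> * (if X (c t) \<omega> \<le> X (a t) \<omega> then 1 else 0)) {..<K}"
proof -
  define Ks where "Ks t = {a t, b t, c t}" for t
  have "indep_vars (\<lambda>t. PiM (Ks t) (\<lambda>_. borel)) (\<lambda>t \<omega>. restrict (\<lambda>i. X i \<omega>) (Ks t)) {..<K}"
    by (rule indep_vars_restrict[OF indep]) (use sub disj in \<open>auto simp: Ks_def disjoint_family_on_def\<close>)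
  then have "indep_vars (\<lambda>_. borel) (\<lambda>t \<omega>. (\<lambda>f. \<alpha> * (if f (b t) \<le> f (a t) then 1 else 0)
                                       + \<beta> * (if f (c t) \<le> f (a t) then 1 else 0 :: real))
                                       (restrict (\<lambda>i. X i \<omega>) (Ks t))) {..<K}"
  proof (rule indep_vars_compose2)
    fix t assume "t \<in> {..<K}"
    have fa: "(\<lambda>f. f (a t)) \<in> measurable (PiM (Ks t) (\<lambda>_. borel)) (borel :: real measure)"
      by (rule measurable_component_singleton) (simp add: Ks_def)
    have fb: "(\<lambda>f. f (b t)) \<in> measurable (PiM (Ks t) (\<lambda>_. borel)) (borel :: real measure)"
      by (rule measurable_component_singleton) (simp add: Ks_def)
    have fc: "(\<lambda>f. f (c t)) \<in> measurable (PiM (Ks t) (\<lambda>_. borel)) (borel :: real measure)"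
      by (rule measurable_component_singleton) (simp add: Ks_def)
    have s1: "{x \<in> space (PiM (Ks t) (\<lambda>_. borel)). x (b t) \<le> (x (a t) :: real)} \<in> sets (PiM (Ks t) (\<lambda>_. borel))"
      using borel_measurable_le[OF fb fa] by simp
    have s2: "{x \<in> space (PiM (Ks t) (\<lambda>_. borel)). x (c t) \<le> (x (a t) :: real)} \<in> sets (PiM (Ks t) (\<lambda>_. borel))"
      using borel_measurable_le[OF fc fa] by simp
    show "(\<lambda>f::nat \<Rightarrow> real. \<alpha> * (if f (b t) \<le> f (a t) then 1 else 0)
                 + \<beta> * (if f (c t) \<le> f (a t) then 1 else 0 :: real)) \<in> borel_measurable (PiM (Ks t) (\<lambda>_. borel))"
      by (intro borel_measurable_add borel_measurable_times borel_measurable_const measurable_If fa fb fc) (use s1 s2 in auto)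
  qed
  then show ?thesis
    by (rule indep_vars_cong[THEN iffD1, rotated -1]) (auto simp: Ks_def)
qed



lemma mod_inj:
  assumes "x < p" "y < p" "(s + x) mod p = (s + y) mod (p::nat)"
  shows "x = y"
proof (cases "x \<le> y")
  case True
  hence "p dvd (s + y) - (s + x)" using assms mod_eq_dvd_iff_nat[of "s+x" "s+y" p] by simp
  hence d: "p dvd y - x" by simp
  have "y - x < p" using assms by auto
  thus ?thesis using d True by (cases "y - x = 0") (auto dest: dvd_imp_le)
next
  case False
  hence "p dvd (s + x) - (s + y)" using assms mod_eq_dvd_iff_nat[of "s+y" "s+x" p] by simp
  hence d: "p dvd x - y" by simp
  have "x - y < p" using assms by auto
  thus ?thesis using d False by (cases "x - y = 0") (auto dest: dvd_imp_le)
qed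

lemma final_ineq:
  fixes K p q r M \<delta> :: real
  assumes "K > 0" "p > 0" "q > 0" "r > 0" "M = max q r"
  shows "-2 * (K * \<delta> / p)\<^sup>2 / (K * (q + r)\<^sup>2) \<le> -2 * K * (\<delta> / (2 * M * p))\<^sup>2"
proof -
  have M: "M > 0" "q + r \<le> 2 * M" using assms by auto
  have "(q + r)\<^sup>2 \<le> (2 * M)\<^sup>2" using M assms by (intro power_mono) auto
  hence le: "p\<^sup>2 * (q + r)\<^sup>2 \<le> p\<^sup>2 * (2 * M)\<^sup>2" using assms by (intro mult_left_mono) auto
  have pos: "0 < p\<^sup>2 * (q + r)\<^sup>2" using assms by simp
  have "K * \<delta>\<^sup>2 / (p\<^sup>2 * (2 * M)\<^sup>2) \<le> K * \<delta>\<^sup>2 / (p\<^sup>2 * (q + r)\<^sup>2)"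
    using le pos assms by (intro divide_left_mono) auto
  moreover have "-2 * (K * \<delta> / p)\<^sup>2 / (K * (q + r)\<^sup>2) = -2 * (K * \<delta>\<^sup>2 / (p\<^sup>2 * (q + r)\<^sup>2))"
  proof -
    have "(K * \<delta> / p)\<^sup>2 / (K * (q + r)\<^sup>2) = (K * (K * \<delta>\<^sup>2)) / (K * (p\<^sup>2 * (q + r)\<^sup>2))"
      by (simp add: power_divide power_mult_distrib power2_eq_square mult_ac)
    also have "\<dots> = K * \<delta>\<^sup>2 / (p\<^sup>2 * (q + r)\<^sup>2)"
      using assms by (subst mult_divide_mult_cancel_left) auto
    finally show ?thesis by simp
  qed
  moreover have "-2 * K * (\<delta> / (2 * M * p))\<^sup>2 = -2 * (K * \<delta>\<^sup>2 / (p\<^sup>2 * (2 * M)\<^sup>2))"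
    using assms M by (simp add: power2_eq_square field_simps)
  ultimately show ?thesis by linarith
qed

theorem lemma1:
  fixes M :: "'a measure" and X :: "nat \<Rightarrow> 'a \<Rightarrow> real"
    and n k1 m :: nat and \<delta> :: real
  assumes "prob_space M"
    and "\<And>i. i \<in> {1..n} \<Longrightarrow> X i \<in> borel_measurable M"
    and "prob_space.indep_vars M (\<lambda>_. borel) X {1..n}"
    and "\<And>i. i \<in> {1..n} \<Longrightarrow> continuous_on UNIV (cdf (distr M borel (X i)))"
    and "\<And>i. i \<in> {1..k1} \<Longrightarrow> distr M borel (X i) = distr M borel (X 1)"
    and "\<And>i. i \<in> {k1+1..n} \<Longrightarrow> distr M borel (X i) = distr M borel (X (k1+1))"
    and "1 \<le> m" and "m < k1" and "k1 \<le> n"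
    and "\<delta> > 0"
  shows "measure M {\<omega> \<in> space M.
            \<bar>(\<Sum>i=1..m. real (rank n X i \<omega>))
              - prob_space.expectation M (\<lambda>\<omega>. \<Sum>i=1..m. real (rank n X i \<omega>))\<bar> > \<delta>}
         \<le> 2 * exp (- 2 * real (min m (min (k1 - m) (n - k1)))
                 * (\<delta> / (2 * real (max (k1 - m) (n - k1)) * real m))\<^sup>2)"
proof -
  interpret prob_space M by fact
  note Xm = assms(2) and indep = assms(3) and cont = assms(4)
  note mk = assms(7,8,9) and dpos = assms(10)
  define S where "S \<omega> = (\<Sum>i=1..m. real (rank n X i \<omega>))" for \<omega>
  show ?thesis
  proof (cases "n = k1")
    case True
    show ?thesis using True by (simp add: order_trans[OF prob_le_1])
  next
    case False
    define p where "p = m"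
    define q where "q = k1 - m"
    define r where "r = n - k1"
    define K where "K = min p (min q r)"
    have pqr: "0 < p" "0 < q" "0 < r" "k1 = m + q" "n = k1 + r"
      using False mk by (auto simp: p_def q_def r_def)
    have K: "0 < K" "K \<le> p" "K \<le> q" "K \<le> r" using pqr by (auto simp: K_def)
    define h where "h i j \<omega> = (if X j \<omega> \<le> X i \<omega> then 1 else 0 :: real)" for i j \<omega>
    define T where "T \<omega> = (\<Sum>i<p. \<Sum>i'<p. h (1+i) (1+i') \<omega>)" for \<omega>
    define V where "V \<omega> = (\<Sum>i<p. (\<Sum>j<q. h (1+i) (m+1+j) \<omega>) + (\<Sum>l<r. h (1+i) (k1+1+l) \<omega>))" for \<omega>
    define c0 where "c0 = real p * (real p + 1) / 2"
    have hm: "h i j \<in> borel_measurable M" if "i \<in> {1..n}" "j \<in> {1..n}" for i j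
      unfolding h_def using borel_measurable_le[OF Xm[OF that(2)] Xm[OF that(1)]]
      by (intro measurable_If) auto
    have hint: "integrable M (h i j)" if "i \<in> {1..n}" "j \<in> {1..n}" for i j
      by (rule integrable_const_bound[where B=1]) (auto simp: h_def hm[OF that])
    have idx: "1 + i \<in> {1..n}" if "i < p" for i using that pqr by (auto simp: p_def)
    have idy: "m + 1 + j \<in> {1..n}" if "j < q" for j using that pqr by auto
    have idz: "k1 + 1 + l \<in> {1..n}" if "l < r" for l using that pqr by auto
    have ST: "S \<omega> = T \<omega> + V \<omega>" for \<omega>
    proof -
      have rk: "real (rank n X i \<omega>) = (\<Sum>i'<p. h i (1+i') \<omega>) + ((\<Sum>j<q. h i (m+1+j) \<omega>) + (\<Sum>l<r. h i (k1+1+l) \<omega>))" for i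
      proof -
        have "real (rank n X i \<omega>) = (\<Sum>j\<in>{1..n}. h i j \<omega>)"
          unfolding rank_def h_def by (subst sum.inter_filter[symmetric]) auto
        also have "\<dots> = (\<Sum>j\<in>{1..k1}. h i j \<omega>) + (\<Sum>j\<in>{k1+1..k1+r}. h i j \<omega>)"
          unfolding pqr(5) by (rule sum.ub_add_nat) simp
        also have "(\<Sum>j\<in>{1..k1}. h i j \<omega>) = (\<Sum>j\<in>{1..m}. h i j \<omega>) + (\<Sum>j\<in>{m+1..m+q}. h i j \<omega>)"
          unfolding pqr(4) by (rule sum.ub_add_nat) simp
        also have "(\<Sum>j\<in>{1..m}. h i j \<omega>) = (\<Sum>i'<p. h i (1+i') \<omega>)"
          using sum_shift_ivl[of "\<lambda>j. h i j \<omega>" 0 p] by (simp add: p_def)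
        also have "(\<Sum>j\<in>{m+1..m+q}. h i j \<omega>) = (\<Sum>j<q. h i (m+1+j) \<omega>)"
          by (rule sum_shift_ivl)
        also have "(\<Sum>j\<in>{k1+1..k1+r}. h i j \<omega>) = (\<Sum>l<r. h i (k1+1+l) \<omega>)"
          by (rule sum_shift_ivl)
        finally show ?thesis by (simp add: add.assoc)
      qed
      have "S \<omega> = (\<Sum>i<p. real (rank n X (1+i) \<omega>))"
        unfolding S_def using sum_shift_ivl[of "\<lambda>i. real (rank n X i \<omega>)" 0 p] by (simp add: p_def)
      also have "\<dots> = (\<Sum>i<p. (\<Sum>i'<p. h (1+i) (1+i') \<omega>) + ((\<Sum>j<q. h (1+i) (m+1+j) \<omega>) + (\<Sum>l<r. h (1+i) (k1+1+l) \<omega>)))"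
        by (simp only: rk)
      also have "\<dots> = T \<omega> + V \<omega>" by (simp add: T_def V_def sum.distrib)
      finally show ?thesis .
    qed
    have Tc: "AE \<omega> in M. T \<omega> = c0"
    proof -
      have ne: "AE \<omega> in M. X a \<omega> \<noteq> X b \<omega>" if "a \<in> {1..n}" "b \<in> {1..n}" "a \<noteq> b" for a b
      proof -
        have E: "{\<omega>\<in>space M. X a \<omega> = X b \<omega>} \<in> sets M"
          using borel_measurable_eq[OF Xm[OF that(1)] Xm[OF that(2)]] .
        have "prob {\<omega>\<in>space M. X a \<omega> = X b \<omega>} = 0"
          by (rule prob_eq_zero[OF indep that cont[OF that(2)]])
        then show ?thesis using AE_iff_measurable[OF E, of "\<lambda>\<omega>. X a \<omega> \<noteq> X b \<omega>"]
          by (simp add: emeasure_eq_measure)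
      qed
      have "AE \<omega> in M. \<forall>i\<in>{..<p}. \<forall>i'\<in>{..<p}. i \<noteq> i' \<longrightarrow> X (1+i) \<omega> \<noteq> X (1+i') \<omega>"
      proof (intro eventually_ball_finite finite_lessThan ballI)
        fix i i' assume ii: "i \<in> {..<p}" "i' \<in> {..<p}"
        show "AE \<omega> in M. i \<noteq> i' \<longrightarrow> X (1+i) \<omega> \<noteq> X (1+i') \<omega>"
        proof (cases "i = i'")
          case True then show ?thesis by simp
        next
          case False
          then show ?thesis using ne[OF idx idx, of i i'] ii by (auto elim!: eventually_mono)
        qed
      qed
      then show ?thesis
      proof (rule eventually_mono)
        fix \<omega> assume a: "\<forall>i\<in>{..<p}. \<forall>i'\<in>{..<p}. i \<noteq> i' \<longrightarrow> X (1+i) \<omega> \<noteq> X (1+i') \<omega>"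
        have "inj_on (\<lambda>i. X (1+i) \<omega>) {..<p}"
          using a unfolding inj_on_def by blast
        from tie_sum[OF this] show "T \<omega> = c0" by (simp add: T_def h_def c0_def)
      qed
    qed
    have Vm: "V \<in> borel_measurable M"
      unfolding V_def[abs_def] by (intro borel_measurable_sum borel_measurable_add hm idx idy idz) auto
    have Vint: "integrable M V"
    proof (rule integrable_const_bound[where B="real p * (real q + real r)"])
      show "AE \<omega> in M. norm (V \<omega>) \<le> real p * (real q + real r)"
      proof (intro AE_I2)
        fix \<omega>
        have "0 \<le> V \<omega>" unfolding V_def by (intro sum_nonneg add_nonneg_nonneg) (auto simp: h_def)
        moreover have "V \<omega> \<le> (\<Sum>i<p. (\<Sum>j<q. 1) + (\<Sum>l<r. 1))"
          unfolding V_def by (intro sum_mono add_mono) (auto simp: h_def)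
        ultimately show "norm (V \<omega>) \<le> real p * (real q + real r)" by simp
      qed
    qed (rule Vm)
    have Tm: "T \<in> borel_measurable M"
      unfolding T_def[abs_def] by (intro borel_measurable_sum hm idx) auto
    have ES: "expectation S = c0 + expectation V"
    proof -
      have Seq: "S = (\<lambda>\<omega>. T \<omega> + V \<omega>)" by (rule ext) (rule ST)
      have "expectation S = expectation (\<lambda>\<omega>. c0 + V \<omega>)"
        unfolding Seq using Tm Vm by (intro integral_cong_AE) (auto intro: eventually_mono[OF Tc])
      also have "\<dots> = c0 + expectation V"
        using Vint by (subst Bochner_Integration.integral_add) (auto simp: prob_space)
      finally show ?thesis .
    qed
    define G where "G \<omega> = real K * (V \<omega> - expectation V) / real p" for \<omega>
    have Gbound: "prob {\<omega>\<in>space M. \<bar>G \<omega>\<bar> \<ge> real K * \<delta> / real p}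
        \<le> 2 * exp (-2 * (real K * \<delta> / real p)\<^sup>2 / (real K * (real q + real r)\<^sup>2))"
    proof -
      define F where "F = {..<p} \<times> {..<q} \<times> {..<r}"
      define A where "A s t = 1 + (fst s + t) mod p" for s :: "nat \<times> nat \<times> nat" and t
      define B where "B s t = m + 1 + (fst (snd s) + t) mod q" for s :: "nat \<times> nat \<times> nat" and t
      define C where "C s t = k1 + 1 + (snd (snd s) + t) mod r" for s :: "nat \<times> nat \<times> nat" and t
      define Z where "Z = (\<lambda>s t \<omega>. real q * (if X (B s t) \<omega> \<le> X (A s t) \<omega> then 1 else 0)
                                   + real r * (if X (C s t) \<omega> \<le> X (A s t) \<omega> then 1 else 0 :: real))"
      define W where "W i j l \<omega> = real q * h (1+i) (m+1+j) \<omega> + real r * h (1+i) (k1+1+l) \<omega>" for i j l \<omega>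
      have ZW: "Z s t = W ((fst s + t) mod p) ((fst (snd s) + t) mod q) ((snd (snd s) + t) mod r)" for s t
        by (simp add: Z_def W_def A_def B_def C_def h_def fun_eq_iff)
      have Wint: "integrable M (W i j l)" if "i < p" "j < q" "l < r" for i j l
        unfolding W_def[abs_def] using hint[OF idx[OF that(1)] idy[OF that(2)]] hint[OF idx[OF that(1)] idz[OF that(3)]]
        by auto
      have Aran: "1 \<le> A s t" "A s t \<le> m" for s t
        using pqr by (auto simp: A_def p_def intro: Suc_leI)
      have Bran: "m < B s t" "B s t \<le> k1" for s t
        using pqr by (auto simp: B_def Suc_le_eq)
      have Cran: "k1 < C s t" "C s t \<le> n" for s t
        using pqr by (auto simp: C_def Suc_le_eq)
      have indZ: "indep_vars (\<lambda>_. borel) (Z s) {..<K}" if "s \<in> F" for s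
      proof -
        have "indep_vars (\<lambda>_. borel) (\<lambda>t \<omega>. real q * (if X (B s t) \<omega> \<le> X (A s t) \<omega> then 1 else 0)
                                       + real r * (if X (C s t) \<omega> \<le> X (A s t) \<omega> then 1 else 0)) {..<K}"
        proof (rule indep_triples[OF indep])
          fix t assume "t < K"
          show "A s t \<in> {1..n} \<and> B s t \<in> {1..n} \<and> C s t \<in> {1..n}"
            using Aran[of s t] Bran[of s t] Cran[of s t] mk by auto
        next
          fix t t' assume tt: "t < K" "t' < K" "t \<noteq> t'"
          have "A s t \<noteq> A s t'" unfolding A_def using mod_inj[of t p t' "fst s"] tt K by auto
          moreover have "B s t \<noteq> B s t'" unfolding B_def using mod_inj[of t q t' "fst (snd s)"] tt K by auto
          moreover have "C s t \<noteq> C s t'" unfolding C_def using mod_inj[of t r t' "snd (snd s)"] tt K by auto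
          ultimately show "{A s t, B s t, C s t} \<inter> {A s t', B s t', C s t'} = {}"
            using Aran[of s t] Bran[of s t] Cran[of s t] Aran[of s t'] Bran[of s t'] Cran[of s t'] by auto
        qed
        thus ?thesis by (simp add: Z_def)
      qed
      have bndZ: "Z s t \<omega> \<in> {0..real q + real r}" for s t \<omega>
        by (auto simp: Z_def)
      have Fne: "finite F" "F \<noteq> {}" using pqr by (auto simp: F_def)
      have qr: "(0::real) < real q + real r" using pqr by simp
      have eps: "real K * \<delta> / real p > 0" using K pqr dpos by simp
      have main: "prob {\<omega>\<in>space M. \<bar>(\<Sum>s\<in>F. \<Sum>t<K. Z s t \<omega> - expectation (Z s t)) / card F\<bar> \<ge> real K * \<delta> / real p}
          \<le> 2 * exp (-2 * (real K * \<delta> / real p)\<^sup>2 / (real K * (real q + real r - 0)\<^sup>2))"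
        by (rule U_abs[OF Fne K(1) qr indZ _ eps]) (use bndZ in auto)
      have WV: "(\<Sum>i<p. \<Sum>j<q. \<Sum>l<r. W i j l \<omega>) = real q * real r * V \<omega>" for \<omega>
      proof -
        have inner: "(\<Sum>j<q. \<Sum>l<r. W i j l \<omega>) = real q * real r * ((\<Sum>j<q. h (1+i) (m+1+j) \<omega>) + (\<Sum>l<r. h (1+i) (k1+1+l) \<omega>))" for i
        proof -
          have "(\<Sum>j<q. \<Sum>l<r. W i j l \<omega>) = (\<Sum>j<q. real r * (real q * h (1+i) (m+1+j) \<omega>) + (\<Sum>l<r. real r * h (1+i) (k1+1+l) \<omega>))"
            unfolding W_def by (simp add: sum.distrib)
          also have "\<dots> = real r * real q * (\<Sum>j<q. h (1+i) (m+1+j) \<omega>) + real q * (\<Sum>l<r. real r * h (1+i) (k1+1+l) \<omega>)"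
            by (simp add: sum.distrib sum_distrib_left mult.assoc)
          also have "\<dots> = real q * real r * ((\<Sum>j<q. h (1+i) (m+1+j) \<omega>) + (\<Sum>l<r. h (1+i) (k1+1+l) \<omega>))"
            by (simp add: sum_distrib_left[symmetric] algebra_simps)
          finally show ?thesis .
        qed
        show ?thesis by (simp add: inner V_def sum_distrib_left)
      qed
      have EW: "(\<Sum>i<p. \<Sum>j<q. \<Sum>l<r. expectation (W i j l)) = real q * real r * expectation V"
      proof -
        have "expectation (\<lambda>\<omega>. \<Sum>i<p. \<Sum>j<q. \<Sum>l<r. W i j l \<omega>) = (\<Sum>i<p. expectation (\<lambda>\<omega>. \<Sum>j<q. \<Sum>l<r. W i j l \<omega>))"
          by (rule Bochner_Integration.integral_sum) (auto intro!: Bochner_Integration.integrable_sum Wint)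
        also have "\<dots> = (\<Sum>i<p. \<Sum>j<q. expectation (\<lambda>\<omega>. \<Sum>l<r. W i j l \<omega>))"
        proof (rule sum.cong[OF refl])
          fix i assume "i \<in> {..<p}"
          then show "expectation (\<lambda>\<omega>. \<Sum>j<q. \<Sum>l<r. W i j l \<omega>) = (\<Sum>j<q. expectation (\<lambda>\<omega>. \<Sum>l<r. W i j l \<omega>))"
            by (intro Bochner_Integration.integral_sum) (auto intro!: Bochner_Integration.integrable_sum Wint)
        qed
        also have "\<dots> = (\<Sum>i<p. \<Sum>j<q. \<Sum>l<r. expectation (W i j l))"
        proof (rule sum.cong[OF refl], rule sum.cong[OF refl])
          fix i j assume "i \<in> {..<p}" "j \<in> {..<q}"
          then show "expectation (\<lambda>\<omega>. \<Sum>l<r. W i j l \<omega>) = (\<Sum>l<r. expectation (W i j l))"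
            by (intro Bochner_Integration.integral_sum) (auto intro!: Wint)
        qed
        finally have "(\<Sum>i<p. \<Sum>j<q. \<Sum>l<r. expectation (W i j l)) = expectation (\<lambda>\<omega>. real q * real r * V \<omega>)"
          by (simp add: WV)
        thus ?thesis by simp
      qed
      have eqG: "(\<Sum>s\<in>F. \<Sum>t<K. Z s t \<omega> - expectation (Z s t)) / card F = G \<omega>" for \<omega>
      proof -
        have "(\<Sum>s\<in>F. \<Sum>t<K. Z s t \<omega> - expectation (Z s t))
            = real K * (\<Sum>i<p. \<Sum>j<q. \<Sum>l<r. W i j l \<omega> - expectation (W i j l))"
          unfolding F_def ZW by (rule triple_identity[OF pqr(1-3)])
        also have "(\<Sum>i<p. \<Sum>j<q. \<Sum>l<r. W i j l \<omega> - expectation (W i j l))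
            = real q * real r * V \<omega> - real q * real r * expectation V"
          by (simp add: sum_subtractf WV EW)
        finally have e: "(\<Sum>s\<in>F. \<Sum>t<K. Z s t \<omega> - expectation (Z s t))
            = real K * (real q * real r * V \<omega> - real q * real r * expectation V)" .
        have cF: "card F = p * q * r" by (simp add: F_def card_cartesian_product)
        show ?thesis using pqr by (simp add: e cF G_def field_simps)
      qed
      show ?thesis using main by (simp add: eqG)
    qed
    have Nnull: "prob {\<omega>\<in>space M. T \<omega> \<noteq> c0} = 0"
    proof -
      have E: "{\<omega>\<in>space M. T \<omega> \<noteq> c0} \<in> sets M" using Tm by measurable
      show ?thesis using Tc AE_iff_measurable[OF E, of "\<lambda>\<omega>. T \<omega> = c0"]
        by (simp add: emeasure_eq_measure)
    qed
    have sub: "{\<omega> \<in> space M. \<bar>S \<omega> - expectation S\<bar> > \<delta>} \<subseteq>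
          {\<omega>\<in>space M. \<bar>G \<omega>\<bar> \<ge> real K * \<delta> / real p} \<union> {\<omega>\<in>space M. T \<omega> \<noteq> c0}"
    proof
      fix \<omega> assume w: "\<omega> \<in> {\<omega> \<in> space M. \<bar>S \<omega> - expectation S\<bar> > \<delta>}"
      show "\<omega> \<in> {\<omega>\<in>space M. \<bar>G \<omega>\<bar> \<ge> real K * \<delta> / real p} \<union> {\<omega>\<in>space M. T \<omega> \<noteq> c0}"
      proof (cases "T \<omega> = c0")
        case True
        have "S \<omega> - expectation S = V \<omega> - expectation V" using True by (simp add: ST ES)
        with w have d: "\<delta> < \<bar>V \<omega> - expectation V\<bar>" by simp
        have pos: "0 \<le> real K / real p" by simp
        have "\<bar>G \<omega>\<bar> = real K / real p * \<bar>V \<omega> - expectation V\<bar>"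
          by (simp add: G_def abs_mult)
        moreover have "real K / real p * \<delta> \<le> real K / real p * \<bar>V \<omega> - expectation V\<bar>"
          using d pos by (intro mult_left_mono) auto
        ultimately show ?thesis using w by auto
      qed (use w in auto)
    qed
    have Gm: "G \<in> borel_measurable M" unfolding G_def using Vm by measurable
    have "measure M {\<omega> \<in> space M. \<bar>S \<omega> - expectation S\<bar> > \<delta>}
        \<le> prob ({\<omega>\<in>space M. \<bar>G \<omega>\<bar> \<ge> real K * \<delta> / real p} \<union> {\<omega>\<in>space M. T \<omega> \<noteq> c0})"
      by (rule finite_measure_mono[OF sub]) (use Gm Tm in measurable)
    also have "\<dots> \<le> prob {\<omega>\<in>space M. \<bar>G \<omega>\<bar> \<ge> real K * \<delta> / real p} + prob {\<omega>\<in>space M. T \<omega> \<noteq> c0}"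
      by (rule measure_Un_le) (use Gm Tm in measurable)
    also have "\<dots> \<le> 2 * exp (-2 * (real K * \<delta> / real p)\<^sup>2 / (real K * (real q + real r)\<^sup>2))"
      using Gbound Nnull by simp
    also have "\<dots> \<le> 2 * exp (- 2 * real K * (\<delta> / (2 * max (real q) (real r) * real p))\<^sup>2)"
      using final_ineq[of "real K" "real p" "real q" "real r" "max (real q) (real r)" \<delta>] K pqr by simp
    finally show ?thesis
      by (simp add: S_def[abs_def] K_def p_def q_def r_def of_nat_max)
  qed
qed

end
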